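(* Let $\gamma^*\ge 0$ and $\epsilon>0$, and let $u,\hat u:\mathbf{S}\to\mathbb{R}^{|P|}$ be two utility functions on the same finite game structure. If $|u_p(s)-\hat u_p(s)|\le\epsilon$ for every $(p,s)\in\mathcal{I}$ satisfying $\mathrm{Reg}_p(s;u)=0$ or $\mathrm{Reg}_p(s;\hat u)\le\gamma^*$, then $E(u)\subseteq E_{2\epsilon}(\hat u)$ and $E_\gamma(\hat u)\subseteq E_{2\epsilon+\gamma}(u)$ for all $0\le\gamma\le\gamma^*$.
   Context: A finite normal-form game structure: finite player set $P$, finite pure strategy sets $S_p$, pure profile space $\mathbf{S}=\prod_p S_p$, index set $\mathcal{I}=P\times\mathbf{S}$. For a utility function $u:\mathbf{S}\to\mathbb{R}^{|P|}$, a pure profile $s$ and player $p$, $A_{p,s}$ is the set of pure profiles obtained by replacing $p$'s strategy in $s$ by any $t\in S_p$; $\mathrm{Reg}_p(s;u)=\sup_{s'\in A_{p,s}}u_p(s')-u_p(s)$, $\mathrm{Reg}(s;u)=\max_p\mathrm{Reg}_p(s;u)$. $E_\gamma(u)=\{s\in\mathbf{S}:\mathrm{Reg}(s;u)\le\gamma\}$ and $E(u)=E_0(u)$. *)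

theory Defs
  imports Complex_Main "HOL-Library.FuncSet"
begin

definition profiles :: "'p set \<Rightarrow> ('p \<Rightarrow> 's set) \<Rightarrow> ('p \<Rightarrow> 's) set" where
  "profiles P S = PiE P S"

definition devs :: "('p \<Rightarrow> 's set) \<Rightarrow> 'p \<Rightarrow> ('p \<Rightarrow> 's) \<Rightarrow> ('p \<Rightarrow> 's) set" where
  "devs S p s = (\<lambda>t. s(p := t)) ` S p"

definition Reg_p :: "('p \<Rightarrow> 's set) \<Rightarrow> (('p \<Rightarrow> 's) \<Rightarrow> 'p \<Rightarrow> real) \<Rightarrow> 'p \<Rightarrow> ('p \<Rightarrow> 's) \<Rightarrow> real" where
  "Reg_p S u p s = (MAX s' \<in> devs S p s. u s' p) - u s p"

definition Reg :: "'p set \<Rightarrow> ('p \<Rightarrow> 's set) \<Rightarrow> (('p \<Rightarrow> 's) \<Rightarrow> 'p \<Rightarrow> real) \<Rightarrow> ('p \<Rightarrow> 's) \<Rightarrow> real" where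
  "Reg P S u s = (MAX p \<in> P. Reg_p S u p s)"

definition Eq_gamma :: "'p set \<Rightarrow> ('p \<Rightarrow> 's set) \<Rightarrow> (('p \<Rightarrow> 's) \<Rightarrow> 'p \<Rightarrow> real) \<Rightarrow> real \<Rightarrow> ('p \<Rightarrow> 's) set" where
  "Eq_gamma P S u \<gamma> = {s \<in> profiles P S. Reg P S u s \<le> \<gamma>}"

definition Eq :: "'p set \<Rightarrow> ('p \<Rightarrow> 's set) \<Rightarrow> (('p \<Rightarrow> 's) \<Rightarrow> 'p \<Rightarrow> real) \<Rightarrow> ('p \<Rightarrow> 's) set" where
  "Eq P S u = Eq_gamma P S u 0"

end

theory Submission
  imports Defs
begin

lemma devs_basic:
  assumes "p \<in> P" "s \<in> profiles P S" "finite (S p)" "S p \<noteq> {}"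
  shows "finite (devs S p s)" "devs S p s \<noteq> {}" "s \<in> devs S p s"
    "\<And>s'. s' \<in> devs S p s \<Longrightarrow> s' \<in> profiles P S \<and> devs S p s' = devs S p s"
proof -
  show "finite (devs S p s)" using assms by (simp add: devs_def)
  show "devs S p s \<noteq> {}" using assms by (simp add: devs_def)
  have "s p \<in> S p" using assms by (auto simp: profiles_def PiE_def Pi_def)
  then show "s \<in> devs S p s" unfolding devs_def by (rule rev_image_eqI) simp
  fix s' assume "s' \<in> devs S p s"
  then obtain t where t: "t \<in> S p" "s' = s(p := t)" by (auto simp: devs_def)
  have "s' \<in> profiles P S" using assms t
    by (auto simp: profiles_def PiE_def Pi_def extensional_def)
  moreover have "devs S p s' = devs S p s" using t by (auto simp: devs_def)
  ultimately show "s' \<in> profiles P S \<and> devs S p s' = devs S p s" by simp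
qed

lemma Reg_le_iff:
  assumes "finite P" "P \<noteq> {}"
  shows "Reg P S u s \<le> g \<longleftrightarrow> (\<forall>p\<in>P. Reg_p S u p s \<le> g)"
  using assms by (simp add: Reg_def)

lemma max_ge:
  assumes "finite A" "x \<in> A" shows "f x \<le> (MAX y\<in>A. f y)"
  using assms by (simp add: Max_ge)

lemma max_obt:
  assumes "finite A" "A \<noteq> {}" obtains x where "x \<in> A" "f x = (MAX y\<in>A. f y)"
proof -
  have "(MAX y\<in>A. f y) \<in> f ` A" using assms by (intro Max_in) auto
  then show ?thesis using that by auto
qed

theorem lemma2:
  fixes P :: "'p set" and S :: "'p \<Rightarrow> 's set"
    and u uh :: "('p \<Rightarrow> 's) \<Rightarrow> 'p \<Rightarrow> real"
    and \<gamma>s \<epsilon> :: real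
  assumes "finite P" and "P \<noteq> {}"
    and "\<And>p. p \<in> P \<Longrightarrow> finite (S p) \<and> S p \<noteq> {}"
    and "\<gamma>s \<ge> 0" and "\<epsilon> > 0"
    and close: "\<And>p s. p \<in> P \<Longrightarrow> s \<in> profiles P S \<Longrightarrow>
              (Reg_p S u p s = 0 \<or> Reg_p S uh p s \<le> \<gamma>s) \<Longrightarrow> \<bar>u s p - uh s p\<bar> \<le> \<epsilon>"
  shows "Eq P S u \<subseteq> Eq_gamma P S uh (2 * \<epsilon>) \<and>
         (\<forall>\<gamma>. 0 \<le> \<gamma> \<and> \<gamma> \<le> \<gamma>s \<longrightarrow> Eq_gamma P S uh \<gamma> \<subseteq> Eq_gamma P S u (2 * \<epsilon> + \<gamma>))"
proof (intro conjI allI impI subsetI)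
  fix s assume "s \<in> Eq P S u"
  then have sp: "s \<in> profiles P S" and r0': "Reg P S u s \<le> 0"
    by (auto simp: Eq_def Eq_gamma_def)
  have r: "\<forall>p\<in>P. Reg_p S u p s \<le> 0" using r0' Reg_le_iff[OF assms(1,2)] by blast
  have "\<forall>p\<in>P. Reg_p S uh p s \<le> 2 * \<epsilon>"
  proof
    fix p assume p: "p \<in> P"
    have fS: "finite (S p)" "S p \<noteq> {}" using assms(3)[OF p] by auto
    note D = devs_basic[OF p sp fS]
    obtain x where x: "x \<in> devs S p s" "uh x p = (MAX y\<in>devs S p s. uh y p)"
      using max_obt[OF D(1,2)] by metis
    have xp: "x \<in> profiles P S" and dx: "devs S p x = devs S p s" using D(4)[OF x(1)] by auto
    have "u s p \<le> (MAX y\<in>devs S p s. u y p)" using max_ge[OF D(1,3)] .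
    then have r0: "Reg_p S u p s = 0" using r p by (auto simp: Reg_p_def)
    have c1: "\<bar>u s p - uh s p\<bar> \<le> \<epsilon>" using close[OF p sp] r0 by auto
    have "Reg_p S uh p x = 0" using x dx by (simp add: Reg_p_def)
    then have c2: "\<bar>u x p - uh x p\<bar> \<le> \<epsilon>" using close[OF p xp] assms(4) by auto
    have "u x p \<le> (MAX y\<in>devs S p s. u y p)" using max_ge[OF D(1) x(1)] .
    then have "u x p \<le> u s p" using r0 by (simp add: Reg_p_def)
    then show "Reg_p S uh p s \<le> 2 * \<epsilon>" using c1 c2 x(2) by (simp add: Reg_p_def)
  qed
  then show "s \<in> Eq_gamma P S uh (2 * \<epsilon>)"
    using sp Reg_le_iff[OF assms(1,2)] unfolding Eq_gamma_def by blast
next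
  fix g s assume g: "0 \<le> g \<and> g \<le> \<gamma>s" and "s \<in> Eq_gamma P S uh g"
  then have sp: "s \<in> profiles P S" and r0': "Reg P S uh s \<le> g"
    by (auto simp: Eq_gamma_def)
  have r: "\<forall>p\<in>P. Reg_p S uh p s \<le> g" using r0' Reg_le_iff[OF assms(1,2)] by blast
  have "\<forall>p\<in>P. Reg_p S u p s \<le> 2 * \<epsilon> + g"
  proof
    fix p assume p: "p \<in> P"
    have fS: "finite (S p)" "S p \<noteq> {}" using assms(3)[OF p] by auto
    note D = devs_basic[OF p sp fS]
    obtain x where x: "x \<in> devs S p s" "u x p = (MAX y\<in>devs S p s. u y p)"
      using max_obt[OF D(1,2)] by metis
    have xp: "x \<in> profiles P S" and dx: "devs S p x = devs S p s" using D(4)[OF x(1)] by auto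
    have c1: "\<bar>u s p - uh s p\<bar> \<le> \<epsilon>" using close[OF p sp] r p g by force
    have "Reg_p S u p x = 0" using x dx by (simp add: Reg_p_def)
    then have c2: "\<bar>u x p - uh x p\<bar> \<le> \<epsilon>" using close[OF p xp] by auto
    have "uh x p \<le> (MAX y\<in>devs S p s. uh y p)" using max_ge[OF D(1) x(1)] .
    moreover have "Reg_p S uh p s \<le> g" using r p by blast
    ultimately have "uh x p \<le> uh s p + g" unfolding Reg_p_def by linarith
    then show "Reg_p S u p s \<le> 2 * \<epsilon> + g" using c1 c2 x(2) by (simp add: Reg_p_def)
  qed
  then show "s \<in> Eq_gamma P S u (2 * \<epsilon> + g)"
    using sp Reg_le_iff[OF assms(1,2)] unfolding Eq_gamma_def by blast
qed

end
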